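(* Let $\mathfrak{g}$ be a finite-dimensional complex Lie algebra and let $x\cdot y=[\phi(x),y]$ be an inner CPA-structure on $\mathfrak{g}$, with $\phi$ a Lie algebra endomorphism. Let $\mathfrak{g}=\bigoplus_\alpha\mathfrak{g}_\alpha$ be the generalized eigenspace decomposition of $\mathfrak{g}$ with respect to $\phi$ (with $\mathfrak{g}_\gamma=0$ if $\gamma$ is not an eigenvalue). Then $[\mathfrak{g}_\alpha,\mathfrak{g}_\beta]\subseteq\mathfrak{g}_{\alpha\beta}$ for all $\alpha,\beta$, and $[\mathfrak{g}_\alpha,\mathfrak{g}_\beta]\neq0$ implies $\alpha+\beta=0$.
   Context: A CPA-structure on $\mathfrak{g}$ is a bilinear product $x\cdot y$ satisfying, for all $x,y,z$: $x\cdot y=y\cdot x$; $[x,y]\cdot z=x\cdot(y\cdot z)-y\cdot(x\cdot z)$; $x\cdot[y,z]=[x\cdot y,z]+[y,x\cdot z]$. It is inner if $x\cdot y=[\phi(x),y]$ with $\phi$ a Lie algebra homomorphism $\mathfrak{g}\to\mathfrak{g}$. *)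

theory Defs
  imports "HOL-Analysis.Analysis"
begin

text \<open>A finite-dimensional complex Lie algebra is modelled (up to linear isomorphism)
  as the coordinate space complex^'n (for an arbitrary finite index type 'n)
  equipped with a bracket br.\<close>

definition lie_algebra :: "(complex^'n \<Rightarrow> complex^'n \<Rightarrow> complex^'n) \<Rightarrow> bool" where
  "lie_algebra br \<longleftrightarrow>
     (\<forall>x. Vector_Spaces.linear (*s) (*s) (br x)) \<and>
     (\<forall>y. Vector_Spaces.linear (*s) (*s) (\<lambda>x. br x y)) \<and>
     (\<forall>x. br x x = 0) \<and>
     (\<forall>x y z. br x (br y z) + br y (br z x) + br z (br x y) = 0)"

text \<open>Lie algebra endomorphism.\<close>
definition lie_hom :: "(complex^'n \<Rightarrow> complex^'n \<Rightarrow> complex^'n) \<Rightarrow> (complex^'n \<Rightarrow> complex^'n) \<Rightarrow> bool" where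
  "lie_hom br \<phi> \<longleftrightarrow> Vector_Spaces.linear (*s) (*s) \<phi> \<and> (\<forall>x y. \<phi> (br x y) = br (\<phi> x) (\<phi> y))"

text \<open>CPA-structure: a bilinear product satisfying the three axioms.\<close>
definition CPA_structure :: "(complex^'n \<Rightarrow> complex^'n \<Rightarrow> complex^'n) \<Rightarrow> (complex^'n \<Rightarrow> complex^'n \<Rightarrow> complex^'n) \<Rightarrow> bool" where
  "CPA_structure br p \<longleftrightarrow>
     (\<forall>x. Vector_Spaces.linear (*s) (*s) (p x)) \<and>
     (\<forall>y. Vector_Spaces.linear (*s) (*s) (\<lambda>x. p x y)) \<and>
     (\<forall>x y. p x y = p y x) \<and>
     (\<forall>x y z. p (br x y) z = p x (p y z) - p y (p x z)) \<and>
     (\<forall>x y z. p x (br y z) = br (p x y) z + br y (p x z))"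

text \<open>Inner CPA-structure: x\<cdot>y = [\<phi> x, y] with \<phi> a Lie algebra homomorphism.\<close>
definition inner_CPA :: "(complex^'n \<Rightarrow> complex^'n \<Rightarrow> complex^'n) \<Rightarrow> (complex^'n \<Rightarrow> complex^'n) \<Rightarrow> bool" where
  "inner_CPA br \<phi> \<longleftrightarrow> lie_hom br \<phi> \<and> CPA_structure br (\<lambda>x y. br (\<phi> x) y)"

text \<open>Generalized eigenspace of \<phi> for \<alpha> (equal to {0} if \<alpha> is not an eigenvalue).\<close>
definition gen_eigenspace :: "(complex^'n \<Rightarrow> complex^'n) \<Rightarrow> complex \<Rightarrow> (complex^'n) set" where
  "gen_eigenspace \<phi> \<alpha> = {x. \<exists>k. ((\<lambda>v. \<phi> v - \<alpha> *s v) ^^ k) x = 0}"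

text \<open>[A,B]: the subspace spanned by all brackets [a,b] with a in A, b in B.\<close>
definition bracket_space :: "(complex^'n \<Rightarrow> complex^'n \<Rightarrow> complex^'n) \<Rightarrow> (complex^'n) set \<Rightarrow> (complex^'n) set \<Rightarrow> (complex^'n) set" where
  "bracket_space br A B = vec.span {br a b | a b. a \<in> A \<and> b \<in> B}"

end

theory Submission
  imports Defs
begin

lemma lin_pow:
  fixes f :: "complex^'n \<Rightarrow> complex^'n"
  assumes "Vector_Spaces.linear (*s) (*s) f"
  shows "Vector_Spaces.linear (*s) (*s) (f^^k)"
proof (induction k)
  case 0 then show ?case using vec.linear_id by (simp add: id_def)
next
  case (Suc k)
  then show ?case using Vector_Spaces.linear_compose[OF Suc assms] by (simp add: funpow_Suc_right comp_def)
qed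

lemma lin_shift:
  fixes f :: "complex^'n \<Rightarrow> complex^'n"
  assumes "Vector_Spaces.linear (*s) (*s) f"
  shows "Vector_Spaces.linear (*s) (*s) (\<lambda>v. f v - a *s v)"
  by (rule vec.linear_compose_sub[OF assms vec.linear_scale_self])

lemma gen_sub:
  fixes f :: "complex^'n \<Rightarrow> complex^'n"
  assumes "Vector_Spaces.linear (*s) (*s) f"
  shows "vec.subspace (gen_eigenspace f a)"
proof -
  let ?C = "\<lambda>v. f v - a *s v"
  have L: "\<And>k. Vector_Spaces.linear (*s) (*s) (?C^^k)" by (rule lin_pow[OF lin_shift[OF assms]])
  have Z: "(?C^^(i+j)) x = 0" if "(?C^^i) x = 0" for i j x
  proof -
    have "(?C^^(j+i)) x = (?C^^j) ((?C^^i) x)" by (simp add: funpow_add)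
    also have "\<dots> = 0" using that vec.linear_0[OF L] by simp
    finally show ?thesis by (simp add: add.commute)
  qed
  show ?thesis unfolding vec.subspace_def gen_eigenspace_def
  proof (intro conjI ballI allI)
    show "0 \<in> {x. \<exists>k. (?C ^^ k) x = 0}" using vec.linear_0[OF L] by auto
  next
    fix x y assume "x \<in> {x. \<exists>k. (?C ^^ k) x = 0}" "y \<in> {x. \<exists>k. (?C ^^ k) x = 0}"
    then obtain i j where i: "(?C ^^ i) x = 0" and j: "(?C ^^ j) y = 0" by auto
    have "(?C ^^ (i+j)) x = 0" using Z[OF i] .
    moreover have "(?C ^^ (i+j)) y = 0" using Z[OF j] by (simp add: add.commute)
    ultimately have "(?C ^^ (i+j)) (x+y) = 0" using vec.linear_add[OF L] by simp
    then show "x + y \<in> {x. \<exists>k. (?C ^^ k) x = 0}" by auto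
  next
    fix c x assume "x \<in> {x. \<exists>k. (?C ^^ k) x = 0}"
    then obtain i where i: "(?C ^^ i) x = 0" by auto
    then have "(?C ^^ i) (c *s x) = 0" using vec.linear_scale[OF L] by simp
    then show "c *s x \<in> {x. \<exists>k. (?C ^^ k) x = 0}" by auto
  qed
qed

locale cpa_setup =
  fixes br :: "complex^'n \<Rightarrow> complex^'n \<Rightarrow> complex^'n"
    and \<phi> :: "complex^'n \<Rightarrow> complex^'n"
  assumes la: "lie_algebra br" and ic: "inner_CPA br \<phi>"
begin

lemma linR: "Vector_Spaces.linear (*s) (*s) (br x)" using la unfolding lie_algebra_def by blast
lemma linL: "Vector_Spaces.linear (*s) (*s) (\<lambda>x. br x y)" using la unfolding lie_algebra_def by blast
lemma linphi: "Vector_Spaces.linear (*s) (*s) \<phi>" using ic unfolding inner_CPA_def lie_hom_def by blast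
lemma hom: "\<phi> (br x y) = br (\<phi> x) (\<phi> y)" using ic unfolding inner_CPA_def lie_hom_def by blast
lemma comm: "br (\<phi> x) y = br (\<phi> y) x" using ic unfolding inner_CPA_def CPA_structure_def by blast

lemma addL: "br (x + y) z = br x z + br y z" using vec.linear_add[OF linL] .
lemma addR: "br z (x + y) = br z x + br z y" using vec.linear_add[OF linR] .
lemma diffL: "br (x - y) z = br x z - br y z" using vec.linear_diff[OF linL] .
lemma diffR: "br z (x - y) = br z x - br z y" using vec.linear_diff[OF linR] .
lemma scL: "br (c *s x) z = c *s br x z" using vec.linear_scale[OF linL] .
lemma scR: "br z (c *s x) = c *s br z x" using vec.linear_scale[OF linR] .
lemma zL: "br 0 z = 0" using vec.linear_0[OF linL] .
lemma zR: "br z 0 = 0" using vec.linear_0[OF linR] .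

lemma anti: "br y x = - br x y"
proof -
  have "br (x+y) (x+y) = 0" using la unfolding lie_algebra_def by blast
  moreover have "br x x = 0" "br y y = 0" using la unfolding lie_algebra_def by blast+
  ultimately have "br y x + br x y = 0" by (simp add: addL addR)
  then show ?thesis by (simp add: eq_neg_iff_add_eq_0)
qed

lemma key1:
  "\<phi> (br x y) - (a*b) *s br x y =
     br (\<phi> x - a *s x) (\<phi> y - b *s y) + b *s br (\<phi> x - a *s x) y + a *s br x (\<phi> y - b *s y)"
  by (simp add: hom diffL diffR scL scR algebra_simps)

lemma part1:
  "((\<lambda>v. \<phi> v - a *s v)^^p) x = 0 \<Longrightarrow> ((\<lambda>v. \<phi> v - b *s v)^^q) y = 0 \<Longrightarrow> p + q \<le> k
   \<Longrightarrow> ((\<lambda>v. \<phi> v - (a*b) *s v)^^k) (br x y) = 0"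
proof (induction k arbitrary: p q x y)
  case 0 then show ?case by (simp add: zL)
next
  case (Suc k)
  let ?C = "\<lambda>v. \<phi> v - (a*b) *s v"
  have L: "Vector_Spaces.linear (*s) (*s) (?C^^k)" by (rule lin_pow[OF lin_shift[OF linphi]])
  show ?case
  proof (cases "p = 0 \<or> q = 0")
    case True
    then have "br x y = 0" using Suc.prems by (auto simp: zL zR)
    then show ?thesis using vec.linear_0[OF lin_pow[OF lin_shift[OF linphi]]] by metis
  next
    case False
    then obtain p' q' where pq: "p = Suc p'" "q = Suc q'" by (meson not0_implies_Suc)
    have x': "((\<lambda>v. \<phi> v - a *s v)^^p') (\<phi> x - a *s x) = 0"
      using Suc.prems(1) pq by (simp add: funpow_Suc_right del: funpow.simps)
    have y': "((\<lambda>v. \<phi> v - b *s v)^^q') (\<phi> y - b *s y) = 0"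
      using Suc.prems(2) pq by (simp add: funpow_Suc_right del: funpow.simps)
    have t1: "(?C^^k) (br (\<phi> x - a *s x) (\<phi> y - b *s y)) = 0"
      by (rule Suc.IH[OF x' y']) (use Suc.prems pq in simp)
    have t2: "(?C^^k) (br (\<phi> x - a *s x) y) = 0"
      by (rule Suc.IH[OF x' Suc.prems(2)]) (use Suc.prems pq in simp)
    have t3: "(?C^^k) (br x (\<phi> y - b *s y)) = 0"
      by (rule Suc.IH[OF Suc.prems(1) y']) (use Suc.prems pq in simp)
    have "(?C^^Suc k) (br x y) = (?C^^k) (?C (br x y))"
      by (simp add: funpow_Suc_right del: funpow.simps)
    also have "\<dots> = 0" unfolding key1
      using t1 t2 t3 by (simp add: vec.linear_add[OF L] vec.linear_scale[OF L])
    finally show ?thesis .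
  qed
qed

lemma key2:
  "(a+b) *s br x y = - br (\<phi> x - a *s x) y - br x (\<phi> y - b *s y)"
proof -
  have "br x (\<phi> y) = - br (\<phi> x) y" using comm[of y x] anti[of "\<phi> y" x] by (metis minus_minus)
  then show ?thesis by (simp add: diffL diffR scL scR algebra_simps)
qed

lemma part2:
  "((\<lambda>v. \<phi> v - a *s v)^^p) x = 0 \<Longrightarrow> ((\<lambda>v. \<phi> v - b *s v)^^q) y = 0 \<Longrightarrow> p + q \<le> k
   \<Longrightarrow> a + b \<noteq> 0 \<Longrightarrow> br x y = 0"
proof (induction k arbitrary: p q x y)
  case 0 then show ?case by (simp add: zL)
next
  case (Suc k)
  show ?case
  proof (cases "p = 0 \<or> q = 0")
    case True
    then show ?thesis using Suc.prems by (auto simp: zL zR)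
  next
    case False
    then obtain p' q' where pq: "p = Suc p'" "q = Suc q'" by (meson not0_implies_Suc)
    have x': "((\<lambda>v. \<phi> v - a *s v)^^p') (\<phi> x - a *s x) = 0"
      using Suc.prems(1) pq by (simp add: funpow_Suc_right del: funpow.simps)
    have y': "((\<lambda>v. \<phi> v - b *s v)^^q') (\<phi> y - b *s y) = 0"
      using Suc.prems(2) pq by (simp add: funpow_Suc_right del: funpow.simps)
    have t2: "br (\<phi> x - a *s x) y = 0"
      by (rule Suc.IH[OF x' Suc.prems(2)]) (use Suc.prems pq in simp_all)
    have t3: "br x (\<phi> y - b *s y) = 0"
      by (rule Suc.IH[OF Suc.prems(1) y']) (use Suc.prems pq in simp_all)
    have "(a+b) *s br x y = 0" using key2 t2 t3 by simp
    then show ?thesis using Suc.prems(4) by (metis vec.scale_eq_0_iff)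
  qed
qed

end

theorem lemma2p12:
  fixes br :: "complex^'n \<Rightarrow> complex^'n \<Rightarrow> complex^'n"
    and \<phi> :: "complex^'n \<Rightarrow> complex^'n"
  assumes "lie_algebra br"
    and "inner_CPA br \<phi>"
  shows "\<forall>\<alpha> \<beta>. bracket_space br (gen_eigenspace \<phi> \<alpha>) (gen_eigenspace \<phi> \<beta>) \<subseteq> gen_eigenspace \<phi> (\<alpha> * \<beta>)
           \<and> (bracket_space br (gen_eigenspace \<phi> \<alpha>) (gen_eigenspace \<phi> \<beta>) \<noteq> {0} \<longrightarrow> \<alpha> + \<beta> = 0)"
proof (intro allI conjI impI)
  interpret cpa_setup br \<phi> using assms by unfold_locales
  fix \<alpha> \<beta> :: complex
  show "bracket_space br (gen_eigenspace \<phi> \<alpha>) (gen_eigenspace \<phi> \<beta>) \<subseteq> gen_eigenspace \<phi> (\<alpha> * \<beta>)"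
    unfolding bracket_space_def
  proof (rule vec.span_minimal[OF _ gen_sub[OF linphi]])
    show "{br a b |a b. a \<in> gen_eigenspace \<phi> \<alpha> \<and> b \<in> gen_eigenspace \<phi> \<beta>} \<subseteq> gen_eigenspace \<phi> (\<alpha> * \<beta>)"
    proof clarify
      fix a b assume "a \<in> gen_eigenspace \<phi> \<alpha>" "b \<in> gen_eigenspace \<phi> \<beta>"
      then obtain p q where "((\<lambda>v. \<phi> v - \<alpha> *s v)^^p) a = 0" "((\<lambda>v. \<phi> v - \<beta> *s v)^^q) b = 0"
        unfolding gen_eigenspace_def by auto
      from part1[OF this order_refl] show "br a b \<in> gen_eigenspace \<phi> (\<alpha> * \<beta>)"
        unfolding gen_eigenspace_def by auto
    qed
  qed
  assume ne: "bracket_space br (gen_eigenspace \<phi> \<alpha>) (gen_eigenspace \<phi> \<beta>) \<noteq> {0}"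
  show "\<alpha> + \<beta> = 0"
  proof (rule ccontr)
    assume nz: "\<alpha> + \<beta> \<noteq> 0"
    have sub: "{br a b |a b. a \<in> gen_eigenspace \<phi> \<alpha> \<and> b \<in> gen_eigenspace \<phi> \<beta>} \<subseteq> {0}"
    proof clarify
      fix a b assume "a \<in> gen_eigenspace \<phi> \<alpha>" "b \<in> gen_eigenspace \<phi> \<beta>"
      then obtain p q where "((\<lambda>v. \<phi> v - \<alpha> *s v)^^p) a = 0" "((\<lambda>v. \<phi> v - \<beta> *s v)^^q) b = 0"
        unfolding gen_eigenspace_def by auto
      from part2[OF this order_refl nz] show "br a b = 0" .
    qed
    have s0: "vec.subspace {0::complex^'n}" unfolding vec.subspace_def by simp
    have "bracket_space br (gen_eigenspace \<phi> \<alpha>) (gen_eigenspace \<phi> \<beta>) \<subseteq> {0}"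
      unfolding bracket_space_def by (rule vec.span_minimal[OF sub s0])
    moreover have "0 \<in> bracket_space br (gen_eigenspace \<phi> \<alpha>) (gen_eigenspace \<phi> \<beta>)"
      unfolding bracket_space_def by (rule vec.span_zero)
    ultimately show False using ne by blast
  qed
qed

end
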